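(* Fix $j\in\{1,\dots,p\}$. Along the Lasso path defined below, the functions $\lambda\mapsto\|z_j(\lambda)\|_2$, $\lambda\mapsto\eta_j(\lambda)$ and $\lambda\mapsto\hat\sigma_j(\lambda)$ are nondecreasing on $(0,\infty)$, and $\tau_j(\lambda)\le 1/\|z_j(\lambda)\|_2$ for every $\lambda>0$. Moreover, if $\hat\gamma_j(\lambda)\neq 0$, then $\eta_j(\lambda)=\lambda n/\|z_j(\lambda)\|_2$.
   Context: $X=(x_1,\dots,x_p)\in\mathbb{R}^{n\times p}$ is a deterministic matrix with columns normalized so that $\|x_j\|_2^2=n$ for all $j$; $X_{-j}$ denotes the $n\times(p-1)$ matrix with columns $x_k$, $k\neq j$. For $\lambda>0$ let $\hat\gamma_j(\lambda)\in\arg\min_{b\in\mathbb{R}^{p-1}}\{\|x_j-X_{-j}b\|_2^2/(2n)+\lambda\|b\|_1\}$ (a Lasso solution; the residual below does not depend on which solution is chosen), $z_j(\lambda)=x_j-X_{-j}\hat\gamma_j(\lambda)$, $\eta_j(\lambda)=\max_{k\neq j}|x_k^Tz_j(\lambda)|/\|z_j(\lambda)\|_2$, $\tau_j(\lambda)=\|z_j(\lambda)\|_2/|x_j^Tz_j(\lambda)|$. Also let $\hat\sigma_j(\lambda)$ be the $\sigma$-component of the minimizer over $(b,\sigma)$, $\sigma\ge 0$, of $\|x_j-X_{-j}b\|_2^2/(2n\sigma)+\sigma/2+\lambda\|b\|_1$ (the scaled Lasso noise-level estimate for regressing $x_j$ on $X_{-j}$). *)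

theory Defs
  imports "HOL-Analysis.Analysis"
begin

text \<open>Coefficient vectors in R^(p-1) (indexed by k ~= j) are represented as
  functions b :: 'p => real with b j = 0.\<close>

definition Xmj :: "real^'p^'n \<Rightarrow> 'p \<Rightarrow> ('p \<Rightarrow> real) \<Rightarrow> real^'n" where
  "Xmj X j b = (\<Sum>k\<in>-{j}. b k *\<^sub>R column k X)"

definition l1mj :: "'p::finite \<Rightarrow> ('p \<Rightarrow> real) \<Rightarrow> real" where
  "l1mj j b = (\<Sum>k\<in>-{j}. \<bar>b k\<bar>)"

definition lasso_obj :: "real^'p^'n \<Rightarrow> 'p \<Rightarrow> real \<Rightarrow> ('p \<Rightarrow> real) \<Rightarrow> real" where
  "lasso_obj X j lam b =
     (norm (column j X - Xmj X j b))^2 / (2 * real CARD('n)) + lam * l1mj j b"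

definition is_lasso_sol :: "real^'p^'n \<Rightarrow> 'p \<Rightarrow> real \<Rightarrow> ('p \<Rightarrow> real) \<Rightarrow> bool" where
  "is_lasso_sol X j lam b \<longleftrightarrow>
     b j = 0 \<and> (\<forall>b'. b' j = 0 \<longrightarrow> lasso_obj X j lam b \<le> lasso_obj X j lam b')"

definition gamma_hat :: "real^'p^'n \<Rightarrow> 'p \<Rightarrow> real \<Rightarrow> ('p \<Rightarrow> real)" where
  "gamma_hat X j lam = (SOME b. is_lasso_sol X j lam b)"

definition zres :: "real^'p^'n \<Rightarrow> 'p \<Rightarrow> real \<Rightarrow> real^'n" where
  "zres X j lam = column j X - Xmj X j (gamma_hat X j lam)"

text \<open>eta_j(lambda) = max_{k ~= j} |x_k^T z_j| / ||z_j||; the 0 inserted only serves as the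
  value for the empty maximum (p = 1), all terms being nonnegative.\<close>
definition eta :: "real^'p^'n \<Rightarrow> 'p \<Rightarrow> real \<Rightarrow> real" where
  "eta X j lam = Max (insert 0 ((\<lambda>k. \<bar>column k X \<bullet> zres X j lam\<bar> / norm (zres X j lam)) ` (-{j})))"

definition tau :: "real^'p^'n \<Rightarrow> 'p \<Rightarrow> real \<Rightarrow> real" where
  "tau X j lam = norm (zres X j lam) / \<bar>column j X \<bullet> zres X j lam\<bar>"

text \<open>Scaled Lasso objective, jointly in (b, sigma), sigma >= 0. At sigma = 0 the objective
  is the lower semicontinuous extension: +infinity if the residual is nonzero (such points
  are excluded from the feasible set), and lambda ||b||_1 if the residual is zero (which is
  what the formula gives with Isabelle's convention 0/0 = 0).\<close>
definition scaled_obj :: "real^'p^'n \<Rightarrow> 'p \<Rightarrow> real \<Rightarrow> ('p \<Rightarrow> real) \<Rightarrow> real \<Rightarrow> real" where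
  "scaled_obj X j lam b \<sigma> =
     (norm (column j X - Xmj X j b))^2 / (2 * real CARD('n) * \<sigma>) + \<sigma> / 2 + lam * l1mj j b"

definition scaled_feasible :: "real^'p^'n \<Rightarrow> 'p \<Rightarrow> ('p \<Rightarrow> real) \<Rightarrow> real \<Rightarrow> bool" where
  "scaled_feasible X j b \<sigma> \<longleftrightarrow>
     b j = 0 \<and> (\<sigma> > 0 \<or> (\<sigma> = 0 \<and> column j X - Xmj X j b = 0))"

definition is_scaled_sol :: "real^'p^'n \<Rightarrow> 'p \<Rightarrow> real \<Rightarrow> ('p \<Rightarrow> real) \<Rightarrow> real \<Rightarrow> bool" where
  "is_scaled_sol X j lam b \<sigma> \<longleftrightarrow> scaled_feasible X j b \<sigma> \<and>
     (\<forall>b' \<sigma>'. scaled_feasible X j b' \<sigma>' \<longrightarrow> scaled_obj X j lam b \<sigma> \<le> scaled_obj X j lam b' \<sigma>')"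

definition sigma_hat :: "real^'p^'n \<Rightarrow> 'p \<Rightarrow> real \<Rightarrow> real" where
  "sigma_hat X j lam = snd (SOME q. is_scaled_sol X j lam (fst q) (snd q))"

end

theory Submission
  imports Defs
begin


lemma exists_min_coercive:
  fixes f :: "real^'p::finite \<Rightarrow> real" and j :: 'p
  assumes cont: "continuous_on UNIV f" and lam: "lam > 0"
    and coer: "\<And>v. lam * (\<Sum>k\<in>-{j}. \<bar>v$k\<bar>) \<le> f v"
  shows "\<exists>v. v$j = 0 \<and> (\<forall>w. w$j = 0 \<longrightarrow> f v \<le> f w)"
proof -
  define S where "S = {v::real^'p. v$j = 0 \<and> (\<Sum>k\<in>-{j}. \<bar>v$k\<bar>) \<le> f 0 / lam}"
  have f0: "0 \<le> f 0" using coer[of 0] lam by simp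
  have "0 \<in> S" using f0 lam unfolding S_def by simp
  have cl: "closed S" unfolding S_def
    by (intro closed_Collect_conj closed_Collect_eq closed_Collect_le continuous_intros continuous_on_component)
  have bd: "bounded S"
  proof -
    have "norm v \<le> f 0 / lam" if "v \<in> S" for v
    proof -
      have "UNIV = insert j (-{j})" by auto
      then have "(\<Sum>i\<in>UNIV. \<bar>v$i\<bar>) = \<bar>v$j\<bar> + (\<Sum>k\<in>-{j}. \<bar>v$k\<bar>)"
        by (metis Compl_iff finite insertI1 sum.insert)
      then show ?thesis using norm_le_l1_cart[of v] that unfolding S_def by auto
    qed
    then show ?thesis unfolding bounded_iff by blast
  qed
  have "compact S" using cl bd compact_eq_bounded_closed by blast
  then obtain v where vS: "v \<in> S" and vmin: "\<forall>w\<in>S. f v \<le> f w"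
    using continuous_attains_inf[of S f] \<open>0 \<in> S\<close> continuous_on_subset[OF cont] by blast
  have "f v \<le> f w" if "w$j = 0" for w
  proof (cases "w \<in> S")
    case True then show ?thesis using vmin by blast
  next
    case False
    then have "(\<Sum>k\<in>-{j}. \<bar>w$k\<bar>) > f 0 / lam" using that unfolding S_def by auto
    then have "lam * (\<Sum>k\<in>-{j}. \<bar>w$k\<bar>) > f 0" using lam by (simp add: field_simps)
    then have "f w > f 0" using coer[of w] by linarith
    moreover have "f v \<le> f 0" using vmin \<open>0 \<in> S\<close> by blast
    ultimately show ?thesis by linarith
  qed
  then show ?thesis using vS unfolding S_def by blast
qed



lemma Xmj_add: "Xmj X j (\<lambda>i. f i + g i) = Xmj X j f + Xmj X j g"
  unfolding Xmj_def by (simp add: scaleR_add_left sum.distrib)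

lemma Xmj_scale: "Xmj X j (\<lambda>i. c * f i) = c *\<^sub>R Xmj X j f"
  unfolding Xmj_def by (simp add: scaleR_sum_right)

lemma Xmj_zero: "Xmj X j (\<lambda>i. 0) = 0"
  unfolding Xmj_def by simp

lemma Xmj_delta:
  fixes X :: "real^'p::finite^'n"
  shows "k \<noteq> j \<Longrightarrow> Xmj X j (\<lambda>i. if i = k then t else 0) = t *\<^sub>R column k X"
  unfolding Xmj_def by (simp add: if_distrib[of "\<lambda>c. c *\<^sub>R _"] cong: if_cong)

lemma Xmj_inner:
  fixes X :: "real^'p::finite^'n"
  shows "Xmj X j b \<bullet> z = (\<Sum>k\<in>-{j}. b k * (column k X \<bullet> z))"
  unfolding Xmj_def by (simp add: inner_sum_left)

lemma l1_pert:
  fixes j :: "'p::finite"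
  shows "k \<noteq> j \<Longrightarrow> l1mj j (\<lambda>i. b i + (if i = k then t else 0)) \<le> l1mj j b + \<bar>t\<bar>"
proof -
  assume k: "k \<noteq> j"
  have "l1mj j (\<lambda>i. b i + (if i = k then t else 0)) \<le> (\<Sum>i\<in>-{j}. \<bar>b i\<bar> + \<bar>if i = k then t else 0\<bar>)"
    unfolding l1mj_def by (intro sum_mono) (rule abs_triangle_ineq)
  also have "\<dots> = l1mj j b + (\<Sum>i\<in>-{j}. if i = k then \<bar>t\<bar> else 0)"
    unfolding l1mj_def sum.distrib by (intro arg_cong2[where f="(+)"] refl sum.cong) auto
  also have "\<dots> = l1mj j b + \<bar>t\<bar>" using k by simp
  finally show ?thesis .
qed

lemma l1_scale:
  fixes j :: "'p::finite"
  shows "c \<ge> 0 \<Longrightarrow> l1mj j (\<lambda>i. c * b i) = c * l1mj j b"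
  unfolding l1mj_def by (simp add: abs_mult sum_distrib_left)

lemma norm_expand:
  fixes z x :: "real^'n"
  shows "(norm (z - t *\<^sub>R x))^2 = (norm z)^2 - 2 * t * (x \<bullet> z) + t^2 * (norm x)^2"
  unfolding power2_norm_eq_inner
  by (simp add: inner_diff_left inner_diff_right inner_commute algebra_simps power2_eq_square)

lemma abs_bound_aux:
  fixes c n l :: real
  assumes n: "n > 0" and l: "l \<ge> 0" and H: "\<And>t. 0 \<le> -2*t*c + t^2*n + 2*n*l*\<bar>t\<bar>"
  shows "\<bar>c\<bar> \<le> n*l"
proof (rule ccontr)
  assume nt: "\<not> \<bar>c\<bar> \<le> n*l"
  define d where "d = \<bar>c\<bar> - n*l"
  have d: "d > 0" using nt d_def by simp
  define t where "t = sgn c * d / n"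
  have eq: "-2*\<bar>c\<bar> + d + 2*n*l = -d" unfolding d_def by simp
  have c0: "c \<noteq> 0" proof
    assume "c = 0"
    then show False using d d_def n l mult_nonneg_nonneg[of n l] by linarith
  qed
  have "-2*t*c + t^2*n + 2*n*l*\<bar>t\<bar> = (d/n) * (-2*\<bar>c\<bar> + d + 2*n*l)"
    using c0 n d unfolding t_def
    by (cases "c > 0") (auto simp: abs_mult field_simps power2_eq_square)
  also have "\<dots> = - (d/n) * d" unfolding eq by simp
  also have "\<dots> < 0" using d n by simp
  finally show False using H[of t] by linarith
qed

lemma zero_aux:
  fixes c d :: real
  assumes d: "d \<ge> 0" and H: "\<And>t. -1 \<le> t \<Longrightarrow> t \<le> 1 \<Longrightarrow> 0 \<le> c*t + d*t^2"
  shows "c = 0"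
proof (rule ccontr)
  assume c: "c \<noteq> 0"
  show False
  proof (cases "c > 0")
    case True
    define t where "t = - c / (c + d)"
    have t1: "-1 \<le> t" "t \<le> 1" using True d unfolding t_def by (auto simp: field_simps)
    have e: "c + d*t = c^2/(c+d)" using True d unfolding t_def
      by (simp add: field_simps power2_eq_square)
    have "c*t + d*t^2 = t * (c + d*t)" by (simp add: algebra_simps power2_eq_square)
    also have "\<dots> = t * (c^2/(c+d))" using e by simp
    also have "\<dots> < 0" using True d unfolding t_def by (intro mult_neg_pos) (auto simp: field_simps)
    finally show False using H[OF t1] by linarith
  next
    case False
    then have cn: "c < 0" using c by simp
    define t where "t = - c / (d - c)"
    have t1: "-1 \<le> t" "t \<le> 1" using cn d unfolding t_def by (auto simp: field_simps)
    have e: "c + d*t = - (c^2)/(d-c)" using cn d unfolding t_def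
      by (simp add: field_simps power2_eq_square)
    have "c*t + d*t^2 = t * (c + d*t)" by (simp add: algebra_simps power2_eq_square)
    also have "\<dots> = t * (- (c^2)/(d-c))" using e by simp
    also have "\<dots> < 0" using cn d unfolding t_def by (intro mult_pos_neg) (auto simp: field_simps)
    finally show False using H[OF t1] by linarith
  qed
qed



lemma lasso_kkt1:
  fixes X :: "real^'p::finite^'n"
  assumes nrm: "\<forall>k. (norm (column k X))^2 = real CARD('n)" and lam: "lam > 0"
    and sol: "is_lasso_sol X j lam b" and k: "k \<noteq> j"
  shows "\<bar>column k X \<bullet> (column j X - Xmj X j b)\<bar> \<le> real CARD('n) * lam"
proof -
  define z where "z = column j X - Xmj X j b"
  define n where "n = real CARD('n)"
  define c where "c = column k X \<bullet> z"
  have n: "n > 0" unfolding n_def by simp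
  have "0 \<le> -2*t*c + t^2*n + 2*n*lam*\<bar>t\<bar>" for t
  proof -
    define b' where "b' = (\<lambda>i. b i + (if i = k then t else 0))"
    have bj: "b' j = 0" using sol k unfolding b'_def is_lasso_sol_def by simp
    have le: "lasso_obj X j lam b \<le> lasso_obj X j lam b'" using sol bj unfolding is_lasso_sol_def by blast
    have res: "column j X - Xmj X j b' = z - t *\<^sub>R column k X"
      unfolding b'_def Xmj_add Xmj_delta[OF k] z_def by simp
    have l1: "l1mj j b' \<le> l1mj j b + \<bar>t\<bar>" unfolding b'_def by (rule l1_pert[OF k])
    have "lasso_obj X j lam b' \<le> ((norm z)^2 - 2*t*c + t^2*n) / (2*n) + lam * (l1mj j b + \<bar>t\<bar>)"
      unfolding lasso_obj_def res norm_expand c_def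
      using l1 lam nrm n_def by (simp add: mult_left_mono)
    moreover have "lasso_obj X j lam b = (norm z)^2 / (2*n) + lam * l1mj j b"
      unfolding lasso_obj_def z_def n_def by simp
    ultimately have "0 \<le> (-2*t*c + t^2*n) / (2*n) + lam * \<bar>t\<bar>" using le
      by (simp add: diff_divide_distrib add_divide_distrib algebra_simps)
    then have "0 \<le> 2*n * ((-2*t*c + t^2*n) / (2*n) + lam * \<bar>t\<bar>)" using n by simp
    also have "\<dots> = -2*t*c + t^2*n + 2*n*lam*\<bar>t\<bar>" using n by (simp add: field_simps)
    finally show ?thesis .
  qed
  then have "\<bar>c\<bar> \<le> n*lam" using abs_bound_aux[OF n] lam by simp
  then show ?thesis unfolding c_def z_def n_def .
qed

lemma lasso_kkt2:
  fixes X :: "real^'p::finite^'n"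
  assumes lam: "lam > 0" and sol: "is_lasso_sol X j lam b"
  shows "Xmj X j b \<bullet> (column j X - Xmj X j b) = real CARD('n) * lam * l1mj j b"
proof -
  define z where "z = column j X - Xmj X j b"
  define n where "n = real CARD('n)"
  define q where "q = Xmj X j b \<bullet> z"
  define L where "L = l1mj j b"
  have n: "n > 0" unfolding n_def by simp
  have "0 \<le> (2*n*lam*L - 2*q)*t + (norm (Xmj X j b))^2*t^2" if t: "-1 \<le> t" "t \<le> 1" for t
  proof -
    define b' where "b' = (\<lambda>i. (1+t) * b i)"
    have bj: "b' j = 0" using sol unfolding b'_def is_lasso_sol_def by simp
    have le: "lasso_obj X j lam b \<le> lasso_obj X j lam b'" using sol bj unfolding is_lasso_sol_def by blast
    have res: "column j X - Xmj X j b' = z - t *\<^sub>R Xmj X j b"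
      unfolding b'_def Xmj_scale z_def by (simp add: algebra_simps)
    have l1: "l1mj j b' = (1+t) * L" unfolding b'_def L_def using t by (simp add: l1_scale)
    have "lasso_obj X j lam b' = ((norm z)^2 - 2*t*q + t^2*(norm (Xmj X j b))^2) / (2*n) + lam * ((1+t)*L)"
      unfolding lasso_obj_def res norm_expand q_def l1 n_def by (simp add: inner_commute)
    moreover have "lasso_obj X j lam b = (norm z)^2 / (2*n) + lam * L"
      unfolding lasso_obj_def z_def n_def L_def by simp
    ultimately have "0 \<le> (-2*t*q + t^2*(norm (Xmj X j b))^2) / (2*n) + lam * t * L" using le
      by (simp add: diff_divide_distrib add_divide_distrib algebra_simps)
    then have "0 \<le> 2*n * ((-2*t*q + t^2*(norm (Xmj X j b))^2) / (2*n) + lam * t * L)" using n by simp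
    also have "\<dots> = (2*n*lam*L - 2*q)*t + (norm (Xmj X j b))^2*t^2" using n by (simp add: field_simps)
    finally show ?thesis .
  qed
  then have "2*n*lam*L - 2*q = 0" by (intro zero_aux[of "(norm (Xmj X j b))^2"]) auto
  then show ?thesis unfolding q_def z_def n_def L_def by simp
qed



definition Cset :: "real^'p^'n \<Rightarrow> 'p \<Rightarrow> real \<Rightarrow> real^'n \<Rightarrow> bool" where
  "Cset X j lam u \<longleftrightarrow> (\<forall>k. k \<noteq> j \<longrightarrow> \<bar>column k X \<bullet> u\<bar> \<le> real CARD('n) * lam)"

definition isproj :: "real^'p^'n \<Rightarrow> 'p \<Rightarrow> real \<Rightarrow> real^'n \<Rightarrow> bool" where
  "isproj X j lam z \<longleftrightarrow> Cset X j lam z \<and> (\<forall>u. Cset X j lam u \<longrightarrow> (column j X - z) \<bullet> (u - z) \<le> 0)"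

lemma proj_of_sol:
  fixes X :: "real^'p::finite^'n"
  assumes nrm: "\<forall>k. (norm (column k X))^2 = real CARD('n)" and lam: "lam > 0"
    and sol: "is_lasso_sol X j lam b"
  shows "isproj X j lam (column j X - Xmj X j b)"
proof -
  define z where "z = column j X - Xmj X j b"
  have C: "Cset X j lam z" unfolding Cset_def z_def using lasso_kkt1[OF nrm lam sol] by blast
  have "(column j X - z) \<bullet> (u - z) \<le> 0" if u: "Cset X j lam u" for u
  proof -
    have "Xmj X j b \<bullet> u = (\<Sum>k\<in>-{j}. b k * (column k X \<bullet> u))" by (rule Xmj_inner)
    also have "\<dots> \<le> (\<Sum>k\<in>-{j}. \<bar>b k\<bar> * (real CARD('n) * lam))"
    proof (rule sum_mono)
      fix k assume "k \<in> -{j}"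
      then have "\<bar>column k X \<bullet> u\<bar> \<le> real CARD('n) * lam" using u unfolding Cset_def by auto
      then have "\<bar>b k * (column k X \<bullet> u)\<bar> \<le> \<bar>b k\<bar> * (real CARD('n) * lam)"
        by (simp add: abs_mult mult_left_mono)
      then show "b k * (column k X \<bullet> u) \<le> \<bar>b k\<bar> * (real CARD('n) * lam)" by linarith
    qed
    also have "\<dots> = real CARD('n) * lam * l1mj j b" unfolding l1mj_def
      by (simp add: sum_distrib_left sum_distrib_right algebra_simps)
    finally have "Xmj X j b \<bullet> u \<le> real CARD('n) * lam * l1mj j b" .
    moreover have "Xmj X j b \<bullet> z = real CARD('n) * lam * l1mj j b"
      unfolding z_def by (rule lasso_kkt2[OF lam sol])
    moreover have "column j X - z = Xmj X j b" unfolding z_def by simp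
    ultimately show ?thesis by (simp add: inner_diff_right)
  qed
  then show ?thesis using C unfolding isproj_def z_def by blast
qed

lemma proj_geom:
  fixes a b p q :: "'v::real_inner"
  assumes h1: "(a - p) \<bullet> (q - p) \<le> 0" and h2: "(b - q) \<bullet> (p - q) \<le> 0"
    and ab: "a = s *\<^sub>R b" and s: "s > 1"
  shows "norm q \<le> norm p"
proof -
  have h1': "(a - p) \<bullet> (p - q) \<ge> 0" using h1
    by (metis inner_minus_right minus_diff_eq neg_0_le_iff_le)
  have "(a - b) \<bullet> (p - q) - (p - q) \<bullet> (p - q) = (a - p) \<bullet> (p - q) - (b - q) \<bullet> (p - q)"
    by (simp add: inner_diff_left algebra_simps)
  then have "(a - b) \<bullet> (p - q) \<ge> (p - q) \<bullet> (p - q)" using h1' h2 by linarith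
  moreover have "(p - q) \<bullet> (p - q) \<ge> 0" by simp
  moreover have "(a - b) \<bullet> (p - q) = (s - 1) * (b \<bullet> (p - q))" using ab by (simp add: algebra_simps)
  ultimately have "(s - 1) * (b \<bullet> (p - q)) \<ge> 0" by linarith
  then have bpq: "b \<bullet> (p - q) \<ge> 0" using s by (simp add: zero_le_mult_iff)
  have "q \<bullet> (p - q) \<ge> b \<bullet> (p - q)" using h2 by (simp add: inner_diff_left)
  then have "q \<bullet> q \<le> q \<bullet> p" using bpq by (simp add: inner_diff_right)
  also have "\<dots> \<le> norm q * norm p" by (rule Cauchy_Schwarz_ineq2[THEN order_trans[OF abs_ge_self]])
  finally have "(norm q)^2 \<le> norm q * norm p" by (simp add: power2_norm_eq_inner)
  then show ?thesis
    by (metis mult_le_cancel_left norm_ge_zero order_less_le power2_eq_square not_le)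
qed

lemma Cset_scale:
  "Cset X j l u \<Longrightarrow> c \<ge> 0 \<Longrightarrow> Cset X j (c * l) (c *\<^sub>R u)"
  unfolding Cset_def
proof (intro allI impI)
  fix k assume H: "\<forall>k. k \<noteq> j \<longrightarrow> \<bar>column k X \<bullet> u\<bar> \<le> real CARD('n) * l" and c: "c \<ge> 0" and k: "k \<noteq> j"
  have "c * \<bar>column k X \<bullet> u\<bar> \<le> c * (real CARD('n) * l)" using H k c by (intro mult_left_mono) auto
  then show "\<bar>column k X \<bullet> c *\<^sub>R u\<bar> \<le> real CARD('n) * (c * l)" using c by (simp add: abs_mult algebra_simps)
qed

lemma proj_mono:
  fixes X :: "real^'p::finite^'n"
  assumes l1: "0 < l1" and l12: "l1 < l2" and p1: "isproj X j l1 z1" and p2: "isproj X j l2 z2"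
  shows "norm z2 * l1 \<le> norm z1 * l2"
proof -
  define x where "x = column j X"
  have l2: "l2 > 0" using l1 l12 by simp
  have "Cset X j ((l1/l2) * l2) ((l1/l2) *\<^sub>R z2)" using p2 l1 l2 by (intro Cset_scale) (auto simp: isproj_def)
  then have c1: "Cset X j l1 ((l1/l2) *\<^sub>R z2)" using l2 by simp
  have "Cset X j ((l2/l1) * l1) ((l2/l1) *\<^sub>R z1)" using p1 l1 l2 by (intro Cset_scale) (auto simp: isproj_def)
  then have c2: "Cset X j l2 ((l2/l1) *\<^sub>R z1)" using l1 by simp
  have P1: "(x - z1) \<bullet> ((l1/l2) *\<^sub>R z2 - z1) \<le> 0" using p1 c1 unfolding isproj_def x_def by blast
  have P2: "(x - z2) \<bullet> ((l2/l1) *\<^sub>R z1 - z2) \<le> 0" using p2 c2 unfolding isproj_def x_def by blast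
  define p where "p = (1/l1) *\<^sub>R z1"
  define q where "q = (1/l2) *\<^sub>R z2"
  define a where "a = (1/l1) *\<^sub>R x"
  define b where "b = (1/l2) *\<^sub>R x"
  have e1: "x - z1 = l1 *\<^sub>R (a - p)" "(l1/l2) *\<^sub>R z2 - z1 = l1 *\<^sub>R (q - p)"
    unfolding a_def p_def q_def using l1 l2 by (auto simp: algebra_simps)
  have e2: "x - z2 = l2 *\<^sub>R (b - q)" "(l2/l1) *\<^sub>R z1 - z2 = l2 *\<^sub>R (p - q)"
    unfolding b_def p_def q_def using l1 l2 by (auto simp: algebra_simps)
  have h1: "(a - p) \<bullet> (q - p) \<le> 0" using P1 l1 unfolding e1 by (simp add: mult_le_0_iff)
  have h2: "(b - q) \<bullet> (p - q) \<le> 0" using P2 l2 unfolding e2 by (simp add: mult_le_0_iff)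
  have ab: "a = (l2/l1) *\<^sub>R b" unfolding a_def b_def using l2 by simp
  have "norm q \<le> norm p" by (rule proj_geom[OF h1 h2 ab]) (use l1 l12 in simp)
  then have "norm z2 / l2 \<le> norm z1 / l1" unfolding p_def q_def using l1 l2 by simp
  then show ?thesis using l1 l2 by (simp add: field_simps)
qed

lemma proj_unique:
  assumes "isproj X j l z" and "Cset X j l (column j X)"
  shows "z = column j X"
proof -
  have "(column j X - z) \<bullet> (column j X - z) \<le> 0" using assms unfolding isproj_def by blast
  then have "(column j X - z) \<bullet> (column j X - z) = 0" using inner_ge_zero[of "column j X - z"] by linarith
  then show ?thesis by simp
qed

lemma proj_self:
  assumes "Cset X j l (column j X)" shows "isproj X j l (column j X)"
  using assms unfolding isproj_def by simp



lemma mono_aux: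
  fixes a1 a2 L1 L2 l1 l2 :: real
  assumes "a1 + l1*L1 \<le> a2 + l1*L2" "a2 + l2*L2 \<le> a1 + l2*L1" "0 \<le> l1" "l1 < l2"
  shows "a1 \<le> a2"
proof -
  have "(l2 - l1) * (L2 - L1) \<le> 0" using assms(1,2) by (simp add: algebra_simps)
  then have "L2 \<le> L1" using assms(4) by (simp add: mult_le_0_iff)
  then have "l1 * L2 \<le> l1 * L1" using assms(3) by (simp add: mult_left_mono)
  then show ?thesis using assms(1) by linarith
qed

lemma lasso_exists:
  fixes X :: "real^'p::finite^'n"
  assumes lam: "lam > 0"
  shows "\<exists>b. is_lasso_sol X j lam b"
proof -
  define f where "f = (\<lambda>v::real^'p. lasso_obj X j lam (($) v))"
  have cont: "continuous_on UNIV f" unfolding f_def lasso_obj_def Xmj_def l1mj_def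
    by (intro continuous_intros) auto
  have coer: "lam * (\<Sum>k\<in>-{j}. \<bar>v$k\<bar>) \<le> f v" for v
    unfolding f_def lasso_obj_def l1mj_def by simp
  obtain v where v: "v$j = 0" "\<forall>w. w$j = 0 \<longrightarrow> f v \<le> f w"
    using exists_min_coercive[OF cont lam coer] by blast
  have "is_lasso_sol X j lam (($) v)" unfolding is_lasso_sol_def
  proof (intro conjI allI impI)
    show "v $ j = 0" by (rule v(1))
    fix b' :: "'p \<Rightarrow> real" assume "b' j = 0"
    then have "f v \<le> f (vec_lambda b')" using v(2) by simp
    moreover have "($) (vec_lambda b') = b'" by (rule ext) simp
    ultimately show "lasso_obj X j lam (($) v) \<le> lasso_obj X j lam b'" unfolding f_def by metis
  qed
  then show ?thesis by blast
qed

lemma gamma_sol: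
  fixes X :: "real^'p::finite^'n"
  assumes lam: "lam > 0"
  shows "is_lasso_sol X j lam (gamma_hat X j lam)"
  unfolding gamma_hat_def using someI_ex[OF lasso_exists[OF lam]] .

definition hobj :: "real^'p^'n \<Rightarrow> 'p \<Rightarrow> real \<Rightarrow> ('p \<Rightarrow> real) \<Rightarrow> real" where
  "hobj X j lam b = norm (column j X - Xmj X j b) / sqrt (real CARD('n)) + lam * l1mj j b"

definition rho :: "real^'p^'n \<Rightarrow> 'p \<Rightarrow> ('p \<Rightarrow> real) \<Rightarrow> real" where
  "rho X j b = norm (column j X - Xmj X j b) / sqrt (real CARD('n))"

lemma scaled_ge:
  fixes X :: "real^'p::finite^'n"
  assumes "scaled_feasible X j b \<sigma>"
  shows "hobj X j lam b \<le> scaled_obj X j lam b \<sigma>"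
    and "scaled_obj X j lam b \<sigma> = hobj X j lam b \<Longrightarrow> \<sigma> = rho X j b"
proof -
  define N where "N = norm (column j X - Xmj X j b)"
  define n where "n = real CARD('n)"
  define r where "r = N / sqrt n"
  have n: "n > 0" unfolding n_def by simp
  have N2: "N^2 = n * r^2" unfolding r_def using n by (simp add: power_divide)
  have r0: "r \<ge> 0" unfolding r_def N_def using n by simp
  have "hobj X j lam b \<le> scaled_obj X j lam b \<sigma> \<and>
        (scaled_obj X j lam b \<sigma> = hobj X j lam b \<longrightarrow> \<sigma> = rho X j b)"
  proof (cases "\<sigma> > 0")
    case True
    have "scaled_obj X j lam b \<sigma> - hobj X j lam b = (\<sigma> - r)^2 / (2*\<sigma>)"
      unfolding scaled_obj_def hobj_def N_def[symmetric] n_def[symmetric] r_def[symmetric] N2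
      using True n by (simp add: field_simps power2_eq_square)
    moreover have "(\<sigma> - r)^2 / (2*\<sigma>) \<ge> 0" using True by simp
    moreover have "(\<sigma> - r)^2 / (2*\<sigma>) = 0 \<Longrightarrow> \<sigma> = r" using True by simp
    ultimately show ?thesis unfolding rho_def N_def[symmetric] n_def[symmetric] r_def[symmetric] by auto
  next
    case False
    then have s0: "\<sigma> = 0" and z: "column j X - Xmj X j b = 0" using assms unfolding scaled_feasible_def by auto
    then show ?thesis unfolding scaled_obj_def hobj_def rho_def z by simp
  qed
  then show "hobj X j lam b \<le> scaled_obj X j lam b \<sigma>"
    and "scaled_obj X j lam b \<sigma> = hobj X j lam b \<Longrightarrow> \<sigma> = rho X j b" by auto
qed

lemma scaled_at_rho:
  fixes X :: "real^'p::finite^'n"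
  assumes "b j = 0"
  shows "scaled_feasible X j b (rho X j b)" and "scaled_obj X j lam b (rho X j b) = hobj X j lam b"
proof -
  define N where "N = norm (column j X - Xmj X j b)"
  define n where "n = real CARD('n)"
  have n: "n > 0" unfolding n_def by simp
  show "scaled_feasible X j b (rho X j b)" using assms unfolding scaled_feasible_def rho_def by auto
  show "scaled_obj X j lam b (rho X j b) = hobj X j lam b"
  proof (cases "N = 0")
    case True
    then have z: "column j X - Xmj X j b = 0" unfolding N_def by simp
    show ?thesis unfolding scaled_obj_def hobj_def rho_def z by simp
  next
    case False
    then have Np: "N > 0" unfolding N_def by simp
    have "N^2 / (2 * n * (N / sqrt n)) + N / sqrt n / 2 = N / sqrt n"
      using Np n by (simp add: field_simps power2_eq_square)
    then show ?thesis unfolding scaled_obj_def hobj_def rho_def N_def[symmetric] n_def[symmetric] by simp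
  qed
qed

lemma scaled_exists:
  fixes X :: "real^'p::finite^'n"
  assumes lam: "lam > 0"
  shows "\<exists>b \<sigma>. is_scaled_sol X j lam b \<sigma>"
proof -
  define f where "f = (\<lambda>v::real^'p. hobj X j lam (($) v))"
  have cont: "continuous_on UNIV f" unfolding f_def hobj_def Xmj_def l1mj_def
    by (intro continuous_intros) auto
  have coer: "lam * (\<Sum>k\<in>-{j}. \<bar>v$k\<bar>) \<le> f v" for v
    unfolding f_def hobj_def l1mj_def by simp
  obtain v where v: "v$j = 0" "\<forall>w. w$j = 0 \<longrightarrow> f v \<le> f w"
    using exists_min_coercive[OF cont lam coer] by blast
  define b where "b = (($) v)"
  have bj: "b j = 0" unfolding b_def using v by simp
  have "is_scaled_sol X j lam b (rho X j b)" unfolding is_scaled_sol_def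
  proof (intro conjI allI impI)
    show "scaled_feasible X j b (rho X j b)" using scaled_at_rho(1)[of b j X] bj by blast
    fix b' \<sigma>' assume fe: "scaled_feasible X j b' \<sigma>'"
    then have "b' j = 0" unfolding scaled_feasible_def by simp
    then have "f v \<le> f (vec_lambda b')" using v(2) by simp
    moreover have "($) (vec_lambda b') = b'" by (rule ext) simp
    ultimately have "hobj X j lam b \<le> hobj X j lam b'" unfolding f_def b_def by metis
    also have "\<dots> \<le> scaled_obj X j lam b' \<sigma>'" by (rule scaled_ge(1)[OF fe])
    finally show "scaled_obj X j lam b (rho X j b) \<le> scaled_obj X j lam b' \<sigma>'"
      using scaled_at_rho(2)[of b j X lam] bj by simp
  qed
  then show ?thesis by blast
qed

lemma scaled_sol_props:
  fixes X :: "real^'p::finite^'n"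
  assumes sol: "is_scaled_sol X j lam b \<sigma>"
  shows "\<sigma> = rho X j b" and "b j = 0" and "\<And>b'. b' j = 0 \<Longrightarrow> hobj X j lam b \<le> hobj X j lam b'"
proof -
  have fe: "scaled_feasible X j b \<sigma>" using sol unfolding is_scaled_sol_def by blast
  then show bj: "b j = 0" unfolding scaled_feasible_def by simp
  have "scaled_obj X j lam b \<sigma> \<le> scaled_obj X j lam b (rho X j b)"
    using sol scaled_at_rho(1)[of b j X] bj unfolding is_scaled_sol_def by blast
  then have eq: "scaled_obj X j lam b \<sigma> = hobj X j lam b"
    using scaled_at_rho(2)[of b j X lam] bj scaled_ge(1)[OF fe, of lam] by simp
  then show "\<sigma> = rho X j b" by (rule scaled_ge(2)[OF fe])
  fix b' :: "'p \<Rightarrow> real" assume "b' j = 0"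
  have "scaled_obj X j lam b \<sigma> \<le> scaled_obj X j lam b' (rho X j b')"
    using sol scaled_at_rho(1)[of b' j X] \<open>b' j = 0\<close> unfolding is_scaled_sol_def by blast
  then show "hobj X j lam b \<le> hobj X j lam b'" using eq scaled_at_rho(2)[of b' j X lam] \<open>b' j = 0\<close> by simp
qed



lemma l1_zero:
  fixes j :: "'p::finite"
  assumes "l1mj j b = 0" "b j = 0" shows "b = (\<lambda>_. 0)"
proof
  fix k show "b k = 0"
  proof (cases "k = j")
    case True then show ?thesis using assms by simp
  next
    case False
    have "\<forall>i\<in>-{j}. \<bar>b i\<bar> = 0" using assms(1) unfolding l1mj_def
      by (subst sum_nonneg_eq_0_iff[symmetric]) auto
    then show ?thesis using False by auto
  qed
qed

context
  fixes X :: "real^'p::finite^'n" and j :: 'p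
  assumes nrm: "\<forall>k. (norm (column k X))^2 = real CARD('n)"
begin

lemma normx: "norm (column k X) = sqrt (real CARD('n))"
  using nrm by (metis norm_ge_zero real_sqrt_unique)

lemma z_nz:
  assumes lam: "lam > 0" shows "zres X j lam \<noteq> 0"
proof
  assume z0: "zres X j lam = 0"
  have sol: "is_lasso_sol X j lam (gamma_hat X j lam)" by (rule gamma_sol[OF lam])
  have "Xmj X j (gamma_hat X j lam) \<bullet> zres X j lam = real CARD('n) * lam * l1mj j (gamma_hat X j lam)"
    unfolding zres_def by (rule lasso_kkt2[OF lam sol])
  then have "l1mj j (gamma_hat X j lam) = 0" using z0 lam by simp
  then have "gamma_hat X j lam = (\<lambda>_. 0)" using l1_zero sol unfolding is_lasso_sol_def by blast
  then have "column j X = 0" using z0 Xmj_zero[of X j] unfolding zres_def by simp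
  then show False using normx[of j] by simp
qed

lemma active:
  assumes lam: "lam > 0" and ne: "gamma_hat X j lam \<noteq> (\<lambda>_. 0)"
  shows "\<exists>k. k \<noteq> j \<and> \<bar>column k X \<bullet> zres X j lam\<bar> = real CARD('n) * lam"
proof -
  define g where "g = gamma_hat X j lam"
  define z where "z = zres X j lam"
  define m where "m = real CARD('n) * lam"
  have sol: "is_lasso_sol X j lam g" unfolding g_def by (rule gamma_sol[OF lam])
  have zdef: "z = column j X - Xmj X j g" unfolding z_def zres_def g_def ..
  have k1: "\<forall>k. k \<noteq> j \<longrightarrow> \<bar>column k X \<bullet> z\<bar> \<le> m"
    unfolding zdef m_def using lasso_kkt1[OF nrm lam sol] by blast
  have "Xmj X j g \<bullet> z = m * l1mj j g" unfolding zdef m_def by (rule lasso_kkt2[OF lam sol])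
  then have "(\<Sum>k\<in>-{j}. g k * (column k X \<bullet> z)) = (\<Sum>k\<in>-{j}. \<bar>g k\<bar> * m)"
    unfolding Xmj_inner l1mj_def by (simp add: sum_distrib_left mult.commute)
  then have S0: "(\<Sum>k\<in>-{j}. \<bar>g k\<bar> * m - g k * (column k X \<bullet> z)) = 0"
    by (simp add: sum_subtractf)
  have nn: "\<forall>k\<in>-{j}. \<bar>g k\<bar> * m - g k * (column k X \<bullet> z) \<ge> 0"
  proof
    fix k assume "k \<in> -{j}"
    then have "\<bar>column k X \<bullet> z\<bar> \<le> m" using k1 by auto
    then have "\<bar>g k\<bar> * \<bar>column k X \<bullet> z\<bar> \<le> \<bar>g k\<bar> * m" by (simp add: mult_left_mono)
    moreover have "g k * (column k X \<bullet> z) \<le> \<bar>g k\<bar> * \<bar>column k X \<bullet> z\<bar>"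
      by (metis abs_ge_self abs_mult)
    ultimately show "\<bar>g k\<bar> * m - g k * (column k X \<bullet> z) \<ge> 0" by linarith
  qed
  have all0: "\<forall>k\<in>-{j}. \<bar>g k\<bar> * m - g k * (column k X \<bullet> z) = 0"
    using S0 nn by (subst sum_nonneg_eq_0_iff[symmetric]) auto
  obtain k where gk: "g k \<noteq> 0" using ne unfolding g_def by auto
  have kj: "k \<noteq> j" using gk sol unfolding is_lasso_sol_def by auto
  then have e: "\<bar>g k\<bar> * m = g k * (column k X \<bullet> z)" using all0 by auto
  have "\<bar>g k\<bar> * m \<le> \<bar>g k\<bar> * \<bar>column k X \<bullet> z\<bar>" unfolding e by (metis abs_ge_self abs_mult)
  then have "m \<le> \<bar>column k X \<bullet> z\<bar>" using gk by simp
  then have "\<bar>column k X \<bullet> z\<bar> = m" using k1 kj by force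
  then show ?thesis using kj unfolding z_def m_def by blast
qed

lemma eta_le:
  assumes lam: "lam > 0"
  shows "eta X j lam \<le> real CARD('n) * lam / norm (zres X j lam)"
proof -
  define z where "z = zres X j lam"
  have sol: "is_lasso_sol X j lam (gamma_hat X j lam)" by (rule gamma_sol[OF lam])
  have k1: "\<forall>k. k \<noteq> j \<longrightarrow> \<bar>column k X \<bullet> z\<bar> \<le> real CARD('n) * lam"
    unfolding z_def zres_def using lasso_kkt1[OF nrm lam sol] by blast
  show ?thesis unfolding eta_def z_def[symmetric]
    using k1 lam by (auto simp: Max_le_iff divide_right_mono)
qed

lemma eta_eq:
  assumes lam: "lam > 0" and ne: "gamma_hat X j lam \<noteq> (\<lambda>_. 0)"
  shows "eta X j lam = real CARD('n) * lam / norm (zres X j lam)"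
proof -
  obtain k where k: "k \<noteq> j" "\<bar>column k X \<bullet> zres X j lam\<bar> = real CARD('n) * lam"
    using active[OF lam ne] by blast
  have mem: "\<bar>column k X \<bullet> zres X j lam\<bar> / norm (zres X j lam) \<in>
      insert 0 ((\<lambda>k. \<bar>column k X \<bullet> zres X j lam\<bar> / norm (zres X j lam)) ` (-{j}))"
    using k(1) by auto
  have "eta X j lam \<ge> real CARD('n) * lam / norm (zres X j lam)"
    unfolding eta_def using Max_ge[OF _ mem] k(2) by simp
  then show ?thesis using eta_le[OF lam] by linarith
qed

definition E0 where "E0 = Max (insert 0 ((\<lambda>k. \<bar>column k X \<bullet> column j X\<bar> / norm (column j X)) ` (-{j})))"

lemma E0_nn: "E0 \<ge> 0"
  unfolding E0_def by (intro Max_ge) auto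

lemma E0_ge: "k \<noteq> j \<Longrightarrow> \<bar>column k X \<bullet> column j X\<bar> / norm (column j X) \<le> E0"
  unfolding E0_def by (intro Max_ge) auto

lemma eta_zero:
  assumes "gamma_hat X j lam = (\<lambda>_. 0)"
  shows "eta X j lam = E0"
  unfolding eta_def E0_def zres_def assms Xmj_zero by simp

lemma tau_le:
  assumes lam: "lam > 0"
  shows "tau X j lam \<le> 1 / norm (zres X j lam)"
proof -
  define g where "g = gamma_hat X j lam"
  define z where "z = zres X j lam"
  have sol: "is_lasso_sol X j lam g" unfolding g_def by (rule gamma_sol[OF lam])
  have zdef: "z = column j X - Xmj X j g" unfolding z_def zres_def g_def ..
  have z0: "z \<noteq> 0" unfolding z_def by (rule z_nz[OF lam])
  have "Xmj X j g \<bullet> z = real CARD('n) * lam * l1mj j g" unfolding zdef by (rule lasso_kkt2[OF lam sol])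
  moreover have "l1mj j g \<ge> 0" unfolding l1mj_def by (simp add: sum_nonneg)
  ultimately have nn: "Xmj X j g \<bullet> z \<ge> 0" using lam by simp
  have "column j X = z + Xmj X j g" unfolding zdef by simp
  then have "column j X \<bullet> z = (norm z)^2 + Xmj X j g \<bullet> z"
    by (simp add: inner_add_left power2_norm_eq_inner)
  then have ge: "column j X \<bullet> z \<ge> (norm z)^2" using nn by linarith
  have pos: "(norm z)^2 > 0" using z0 by simp
  have pos2: "\<bar>column j X \<bullet> z\<bar> > 0" using ge pos by linarith
  have "tau X j lam = norm z / \<bar>column j X \<bullet> z\<bar>" unfolding tau_def z_def ..
  also have "\<dots> \<le> norm z / (norm z)^2"
    using ge pos pos2 by (intro divide_left_mono) auto
  also have "\<dots> = 1 / norm z" using z0 by (simp add: power2_eq_square)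
  finally show ?thesis unfolding z_def .
qed

end


lemma zres_proj:
  fixes X :: "real^'p::finite^'n"
  assumes nrm: "\<forall>k. (norm (column k X))^2 = real CARD('n)" and lam: "lam > 0"
  shows "isproj X j lam (zres X j lam)"
  unfolding zres_def by (rule proj_of_sol[OF nrm lam gamma_sol[OF lam]])

lemma norm_mono:
  fixes X :: "real^'p::finite^'n"
  assumes l1: "0 < l1" and l12: "l1 < l2"
  shows "norm (zres X j l1) \<le> norm (zres X j l2)"
proof -
  have l2: "0 < l2" using l1 l12 by simp
  define g1 where "g1 = gamma_hat X j l1"
  define g2 where "g2 = gamma_hat X j l2"
  have s1: "is_lasso_sol X j l1 g1" unfolding g1_def by (rule gamma_sol[OF l1])
  have s2: "is_lasso_sol X j l2 g2" unfolding g2_def by (rule gamma_sol[OF l2])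
  define a1 where "a1 = (norm (zres X j l1))^2 / (2 * real CARD('n))"
  define a2 where "a2 = (norm (zres X j l2))^2 / (2 * real CARD('n))"
  have o1: "\<And>l. lasso_obj X j l g1 = a1 + l * l1mj j g1"
    unfolding lasso_obj_def a1_def zres_def g1_def ..
  have o2: "\<And>l. lasso_obj X j l g2 = a2 + l * l1mj j g2"
    unfolding lasso_obj_def a2_def zres_def g2_def ..
  have "lasso_obj X j l1 g1 \<le> lasso_obj X j l1 g2" using s1 s2 unfolding is_lasso_sol_def by blast
  moreover have "lasso_obj X j l2 g2 \<le> lasso_obj X j l2 g1" using s1 s2 unfolding is_lasso_sol_def by blast
  ultimately have "a1 \<le> a2" unfolding o1 o2 by (rule mono_aux) (use l1 l12 in auto)
  then have "(norm (zres X j l1))^2 \<le> (norm (zres X j l2))^2" unfolding a1_def a2_def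
    by (simp add: divide_right_mono_neg field_simps)
  then show ?thesis by (simp add: power_mono_iff)
qed

lemma sigma_sol:
  fixes X :: "real^'p::finite^'n"
  assumes lam: "lam > 0"
  shows "\<exists>b. sigma_hat X j lam = rho X j b \<and> b j = 0 \<and> (\<forall>b'. b' j = 0 \<longrightarrow> hobj X j lam b \<le> hobj X j lam b')"
proof -
  obtain b \<sigma> where "is_scaled_sol X j lam b \<sigma>" using scaled_exists[OF lam] by blast
  then have "\<exists>q. is_scaled_sol X j lam (fst q) (snd q)" by (intro exI[of _ "(b, \<sigma>)"]) simp
  then have "is_scaled_sol X j lam (fst (SOME q. is_scaled_sol X j lam (fst q) (snd q)))
      (snd (SOME q. is_scaled_sol X j lam (fst q) (snd q)))" by (rule someI_ex)
  then show ?thesis unfolding sigma_hat_def using scaled_sol_props by blast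
qed

lemma sigma_mono:
  fixes X :: "real^'p::finite^'n"
  assumes l1: "0 < l1" and l12: "l1 < l2"
  shows "sigma_hat X j l1 \<le> sigma_hat X j l2"
proof -
  have l2: "0 < l2" using l1 l12 by simp
  obtain b1 where b1: "sigma_hat X j l1 = rho X j b1" "b1 j = 0" "\<forall>b'. b' j = 0 \<longrightarrow> hobj X j l1 b1 \<le> hobj X j l1 b'"
    using sigma_sol[OF l1] by blast
  obtain b2 where b2: "sigma_hat X j l2 = rho X j b2" "b2 j = 0" "\<forall>b'. b' j = 0 \<longrightarrow> hobj X j l2 b2 \<le> hobj X j l2 b'"
    using sigma_sol[OF l2] by blast
  have h: "\<And>l b. hobj X j l b = rho X j b + l * l1mj j b" unfolding hobj_def rho_def ..
  have "rho X j b1 \<le> rho X j b2"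
    using b1(3)[rule_format, of b2, OF b2(2)] b2(3)[rule_format, of b1, OF b1(2)] unfolding h
    by (rule mono_aux) (use l1 l12 in auto)
  then show ?thesis using b1 b2 by simp
qed

lemma eta_mono:
  fixes X :: "real^'p::finite^'n"
  assumes nrm: "\<forall>k. (norm (column k X))^2 = real CARD('n)"
    and l1: "0 < l1" and l12: "l1 < l2"
  shows "eta X j l1 \<le> eta X j l2"
proof -
  define n where "n = real CARD('n)"
  have n: "n > 0" unfolding n_def by simp
  have l2: "0 < l2" using l1 l12 by simp
  define z1 where "z1 = zres X j l1"
  define z2 where "z2 = zres X j l2"
  have z1n: "norm z1 > 0" unfolding z1_def using z_nz[OF nrm l1] by simp
  have z2n: "norm z2 > 0" unfolding z2_def using z_nz[OF nrm l2] by simp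
  have P1: "isproj X j l1 z1" unfolding z1_def by (rule zres_proj[OF nrm l1])
  have P2: "isproj X j l2 z2" unfolding z2_def by (rule zres_proj[OF nrm l2])
  have e1: "eta X j l1 \<le> n * l1 / norm z1" unfolding n_def z1_def by (rule eta_le[OF nrm l1])
  show ?thesis
  proof (cases "gamma_hat X j l2 = (\<lambda>_. 0)")
    case False
    have e2: "eta X j l2 = n * l2 / norm z2" unfolding n_def z2_def by (rule eta_eq[OF nrm l2 False])
    have "norm z2 * l1 \<le> norm z1 * l2" by (rule proj_mono[OF l1 l12 P1 P2])
    then have "n * l1 / norm z1 \<le> n * l2 / norm z2" using z1n z2n n
      by (simp add: field_simps mult_left_mono)
    then show ?thesis using e1 e2 by linarith
  next
    case True
    have e2: "eta X j l2 = E0 X j" by (rule eta_zero[OF nrm True])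
    show ?thesis
    proof (cases "gamma_hat X j l1 = (\<lambda>_. 0)")
      case True
      then show ?thesis using e2 eta_zero[OF nrm True] by simp
    next
      case ne: False
      have e1': "eta X j l1 = n * l1 / norm z1" unfolding n_def z1_def by (rule eta_eq[OF nrm l1 ne])
      define x where "x = column j X"
      have xn: "norm x = sqrt n" unfolding x_def n_def by (rule normx[OF nrm])
      have xpos: "norm x > 0" using xn n by simp
      define l0 where "l0 = E0 X j * norm x / n"
      have E0eq: "E0 X j = n * l0 / norm x" unfolding l0_def using n xpos by simp
      have E0nn: "E0 X j \<ge> 0" by (rule E0_nn[OF nrm])
      have Cx: "Cset X j l0 x" unfolding Cset_def
      proof (intro allI impI)
        fix k assume k: "k \<noteq> j"
        have "\<bar>column k X \<bullet> x\<bar> / norm x \<le> E0 X j" unfolding x_def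
          by (rule E0_ge[OF nrm k])
        then have "\<bar>column k X \<bullet> x\<bar> \<le> E0 X j * norm x" using xpos by (simp add: field_simps)
        then show "\<bar>column k X \<bullet> x\<bar> \<le> real CARD('n) * l0" unfolding l0_def n_def by simp
      qed
      show ?thesis
      proof (cases "l0 \<le> l1")
        case True
        have "Cset X j l1 x" using Cx True n unfolding Cset_def n_def
          by (meson dual_order.trans mult_left_mono of_nat_0_le_iff)
        then have zx: "z1 = x" using proj_unique[OF P1] unfolding x_def by blast
        define g where "g = gamma_hat X j l1"
        have sol: "is_lasso_sol X j l1 g" unfolding g_def by (rule gamma_sol[OF l1])
        have "Xmj X j g = 0" using zx unfolding z1_def zres_def x_def g_def by simp
        moreover have "Xmj X j g \<bullet> (column j X - Xmj X j g) = real CARD('n) * l1 * l1mj j g"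
          by (rule lasso_kkt2[OF l1 sol])
        ultimately have "l1mj j g = 0" using l1 by simp
        then have "g = (\<lambda>_. 0)" using l1_zero sol unfolding is_lasso_sol_def by blast
        then show ?thesis using ne unfolding g_def by simp
      next
        case False
        have l0pos: "0 < l1" by (rule l1)
        have Px: "isproj X j l0 x" unfolding x_def by (rule proj_self) (use Cx x_def in simp)
        have "norm x * l1 \<le> norm z1 * l0" by (rule proj_mono[OF l1 _ P1 Px]) (use False in simp)
        then have "n * l1 / norm z1 \<le> n * l0 / norm x" using z1n xpos n
          by (simp add: field_simps mult_left_mono)
        then show ?thesis using e1' e2 E0eq by simp
      qed
    qed
  qed
qed

theorem proposition1:
  fixes X :: "real^'p^'n" and j :: 'p
  assumes "\<forall>k. (norm (column k X))^2 = real CARD('n)"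
  shows "mono_on {0<..} (\<lambda>lam. norm (zres X j lam))
    \<and> mono_on {0<..} (eta X j)
    \<and> mono_on {0<..} (sigma_hat X j)
    \<and> (\<forall>lam>0. tau X j lam \<le> 1 / norm (zres X j lam))
    \<and> (\<forall>lam>0. gamma_hat X j lam \<noteq> (\<lambda>_. 0) \<longrightarrow> eta X j lam = lam * real CARD('n) / norm (zres X j lam))"
proof (intro conjI allI impI)
  show "mono_on {0<..} (\<lambda>lam. norm (zres X j lam))"
    by (intro mono_onI) (auto simp: order_le_less dest: norm_mono[of _ _ X j])
  show "mono_on {0<..} (eta X j)"
    by (intro mono_onI) (auto simp: order_le_less dest: eta_mono[OF assms])
  show "mono_on {0<..} (sigma_hat X j)"
    by (intro mono_onI) (auto simp: order_le_less dest: sigma_mono[of _ _ X j])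
  fix lam :: real assume lam: "lam > 0"
  show "tau X j lam \<le> 1 / norm (zres X j lam)" by (rule tau_le[OF assms lam])
  assume "gamma_hat X j lam \<noteq> (\<lambda>_. 0)"
  then show "eta X j lam = lam * real CARD('n) / norm (zres X j lam)"
    using eta_eq[OF assms lam] by (simp add: mult.commute)
qed


end
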